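(* Let $G$ be a finite group and $H$ a subgroup of $G$. Then $|\mathrm{Solv}(H)| \leq |\mathrm{Solv}(G)|$.
   Context: For a finite group $G$ and $x \in G$, the solvabilizer of $x$ in $G$ is $\mathrm{Sol}_G(x) = \{y \in G : \langle x, y \rangle \text{ is solvable}\}$. $\mathrm{Solv}(G) = \{\mathrm{Sol}_G(x) : x \in G\}$ is the set of distinct solvabilizers of elements of $G$. *)

theory Defs
  imports "HOL-Algebra.Solvable_Groups" "HOL-Algebra.Generated_Groups"
begin

definition solvabilizer :: "('a, 'b) monoid_scheme \<Rightarrow> 'a \<Rightarrow> 'a set" where
  "solvabilizer G x =
     {y \<in> carrier G. solvable (G\<lparr>carrier := generate G {x, y}\<rparr>)}"

definition Solv :: "('a, 'b) monoid_scheme \<Rightarrow> 'a set set" where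
  "Solv G = (\<lambda>x. solvabilizer G x) ` carrier G"

end

theory Submission
  imports Defs
begin

lemma solv_sub:
  assumes "group G" "subgroup H G" "x \<in> H"
  shows "solvabilizer (G\<lparr>carrier := H\<rparr>) x = solvabilizer G x \<inter> H"
proof (rule Set.set_eqI)
  fix y
  have hs: "H \<subseteq> carrier G" using subgroup.subset[OF assms(2)] .
  show "y \<in> solvabilizer (G\<lparr>carrier := H\<rparr>) x \<longleftrightarrow> y \<in> solvabilizer G x \<inter> H"
  proof (cases "y \<in> H")
    case True
    have "{x, y} \<subseteq> H" using True assms(3) by simp
    then have g: "generate (G\<lparr>carrier := H\<rparr>) {x, y} = generate G {x, y}"
      using group.generate_consistent[OF assms(1) _ assms(2)] by blast
    have r: "(G\<lparr>carrier := H\<rparr>)\<lparr>carrier := generate G {x, y}\<rparr> = G\<lparr>carrier := generate G {x, y}\<rparr>"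
      by simp
    have c: "carrier (G\<lparr>carrier := H\<rparr>) = H" by simp
    have yc: "y \<in> carrier G" using True hs by blast
    show ?thesis unfolding solvabilizer_def by (simp only: g r c mem_Collect_eq Int_iff True yc simp_thms)
  next
    case False
    then show ?thesis unfolding solvabilizer_def by simp
  qed
qed

theorem lemma2p4:
  fixes G :: "('a, 'b) monoid_scheme" and H :: "'a set"
  assumes "group G" and "finite (carrier G)" and "subgroup H G"
  shows "card (Solv (G\<lparr>carrier := H\<rparr>)) \<le> card (Solv G)"
proof -
  have hs: "H \<subseteq> carrier G" using subgroup.subset[OF assms(3)] .
  have eq: "Solv (G\<lparr>carrier := H\<rparr>) = (\<lambda>S. S \<inter> H) ` (solvabilizer G ` H)"
  proof -
    have "solvabilizer (G\<lparr>carrier := H\<rparr>) ` H = (\<lambda>x. solvabilizer G x \<inter> H) ` H"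
      by (rule image_cong) (simp_all add: solv_sub[OF assms(1) assms(3)])
    thus ?thesis unfolding Solv_def by (simp add: image_image)
  qed
  have finH: "finite H" using hs assms(2) finite_subset by blast
  have fin: "finite (Solv G)" unfolding Solv_def using assms(2) by simp
  have "card (Solv (G\<lparr>carrier := H\<rparr>)) \<le> card (solvabilizer G ` H)"
    unfolding eq by (intro card_image_le finite_imageI finH)
  also have "\<dots> \<le> card (Solv G)"
    unfolding Solv_def using hs by (intro card_mono finite_imageI assms(2) image_mono)
  finally show ?thesis .
qed

end
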